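(* Let $x\in\mathbb{R}\setminus\mathbb{Q}$. Then $\gamma(x)=\tau(2x)$, where, for an irrational $y$ with continued fraction convergents $p_n/q_n$ ($n\in\mathbb{N}$), \[\tau(y)=\sup\Big\{\tau : \Big|y-\tfrac{p_n}{q_n}\Big|<\tfrac{1}{q_n^{\tau}} \text{ for infinitely many convergents } \tfrac{p_n}{q_n}\text{ of } y \text{ with } p_n,q_n \text{ not both odd}\Big\},\] \[\gamma(y)=\sup\Big\{\gamma : \Big|y-\tfrac{p_n}{q_n}\Big|<\tfrac{1}{q_n^{\gamma}} \text{ for infinitely many } n\in\mathbb{N} \text{ with } q_n\equiv 0,1,3 \pmod 4\Big\}.\]
   Context: The convergents $p_n/q_n$ of an irrational number are the (irreducible) partial quotients of its regular continued fraction expansion. *)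

theory Defs
  imports Complex_Main "HOL-Library.Extended_Real"
begin

fun cf_rem :: "real \<Rightarrow> nat \<Rightarrow> real" where
  "cf_rem y 0 = y"
| "cf_rem y (Suc n) = 1 / (cf_rem y n - of_int \<lfloor>cf_rem y n\<rfloor>)"

definition cf_a :: "real \<Rightarrow> nat \<Rightarrow> int" where
  "cf_a y n = \<lfloor>cf_rem y n\<rfloor>"

fun cf_p :: "real \<Rightarrow> nat \<Rightarrow> int" where
  "cf_p y 0 = cf_a y 0"
| "cf_p y (Suc 0) = cf_a y 1 * cf_a y 0 + 1"
| "cf_p y (Suc (Suc n)) = cf_a y (Suc (Suc n)) * cf_p y (Suc n) + cf_p y n"

fun cf_q :: "real \<Rightarrow> nat \<Rightarrow> int" where
  "cf_q y 0 = 1"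
| "cf_q y (Suc 0) = cf_a y 1"
| "cf_q y (Suc (Suc n)) = cf_a y (Suc (Suc n)) * cf_q y (Suc n) + cf_q y n"

definition tau_exp :: "real \<Rightarrow> ereal" where
  "tau_exp y = Sup (ereal ` {t :: real. infinite {n. \<not> (odd (cf_p y n) \<and> odd (cf_q y n)) \<and>
       \<bar>y - of_int (cf_p y n) / of_int (cf_q y n)\<bar> < 1 / (of_int (cf_q y n)) powr t}})"

definition gamma_exp :: "real \<Rightarrow> ereal" where
  "gamma_exp y = Sup (ereal ` {g :: real. infinite {n. cf_q y n mod 4 \<in> {0, 1, 3} \<and>
       \<bar>y - of_int (cf_p y n) / of_int (cf_q y n)\<bar> < 1 / (of_int (cf_q y n)) powr g}})"

end

theory Submission
  imports Defs
begin


declare cf_rem.simps(2)[simp del]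

definition cfE :: "real \<Rightarrow> nat \<Rightarrow> real" where
  "cfE y n = of_int (cf_q y n) * y - of_int (cf_p y n)"

lemma cf_rem_irrat: assumes "y \<notin> \<rat>" shows "cf_rem y n \<notin> \<rat>"
proof (induction n)
  case 0 then show ?case using assms by simp
next
  case (Suc n)
  show ?case
  proof
    assume "cf_rem y (Suc n) \<in> \<rat>"
    then have "inverse (cf_rem y (Suc n)) \<in> \<rat>" by (rule Rats_inverse)
    then have "cf_rem y n - of_int \<lfloor>cf_rem y n\<rfloor> \<in> \<rat>" by (simp add: inverse_eq_divide cf_rem.simps(2))
    then have "cf_rem y n - of_int \<lfloor>cf_rem y n\<rfloor> + of_int \<lfloor>cf_rem y n\<rfloor> \<in> \<rat>"
      by (intro Rats_add) auto
    then show False using Suc by simp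
  qed
qed

lemma cf_rem_frac: assumes "y \<notin> \<rat>"
  shows "0 < cf_rem y n - of_int (cf_a y n)" "cf_rem y n - of_int (cf_a y n) < 1"
proof -
  have "cf_rem y n \<noteq> of_int (cf_a y n)" using cf_rem_irrat[OF assms, of n] by auto
  moreover have "of_int (cf_a y n) \<le> cf_rem y n" "cf_rem y n < of_int (cf_a y n) + 1"
    unfolding cf_a_def by linarith+
  ultimately show "0 < cf_rem y n - of_int (cf_a y n)" "cf_rem y n - of_int (cf_a y n) < 1"
    by linarith+
qed

lemma cf_rem_Suc: "cf_rem y (Suc n) = 1 / (cf_rem y n - of_int (cf_a y n))"
  by (simp add: cf_a_def cf_rem.simps(2))

lemma cf_rem_gt1: assumes "y \<notin> \<rat>" shows "cf_rem y (Suc n) > 1"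
  using cf_rem_frac[OF assms, of n] unfolding cf_rem_Suc by simp

lemma cf_a_pos: assumes "y \<notin> \<rat>" shows "cf_a y (Suc n) \<ge> 1"
  using cf_rem_gt1[OF assms, of n] unfolding cf_a_def by linarith

lemma cf_q_mono1: assumes "y \<notin> \<rat>" shows "1 \<le> cf_q y n \<and> cf_q y n \<le> cf_q y (Suc n)"
proof (induction n)
  case 0 then show ?case using cf_a_pos[OF assms, of 0] by simp
next
  case (Suc n)
  have "cf_a y (Suc (Suc n)) * cf_q y (Suc n) \<ge> 1 * cf_q y (Suc n)"
    by (rule mult_right_mono) (use Suc cf_a_pos[OF assms] in auto)
  moreover have "cf_q y (Suc (Suc n)) = cf_a y (Suc (Suc n)) * cf_q y (Suc n) + cf_q y n" by simp
  ultimately show ?case using Suc by linarith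
qed

lemma cf_q_pos: "y \<notin> \<rat> \<Longrightarrow> 1 \<le> cf_q y n" using cf_q_mono1 by blast

lemma cf_q_step: "y \<notin> \<rat> \<Longrightarrow> cf_q y n \<le> cf_q y (Suc n)" using cf_q_mono1 by blast

lemma cf_q_strict: assumes "y \<notin> \<rat>" shows "cf_q y (Suc (Suc n)) \<ge> cf_q y (Suc n) + 1"
proof -
  have "cf_a y (Suc (Suc n)) * cf_q y (Suc n) \<ge> 1 * cf_q y (Suc n)"
  proof (rule mult_right_mono)
    show "0 \<le> cf_q y (Suc n)" using cf_q_pos[OF assms, of "Suc n"] by simp
  qed (use cf_a_pos[OF assms] in auto)
  moreover have "cf_q y (Suc (Suc n)) = cf_a y (Suc (Suc n)) * cf_q y (Suc n) + cf_q y n" by simp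
  ultimately show ?thesis using cf_q_pos[OF assms, of n] by linarith
qed

lemma cf_q_ge: assumes "y \<notin> \<rat>" shows "int n \<le> cf_q y n"
proof (induction n rule: nat_less_induct)
  case (1 n)
  show ?case
  proof (cases n)
    case 0 then show ?thesis by simp
  next
    case (Suc m)
    show ?thesis
    proof (cases m)
      case 0 then show ?thesis using Suc cf_q_pos[OF assms, of 1] by simp
    next
      case (Suc k)
      then show ?thesis using \<open>n = Suc m\<close> 1 cf_q_strict[OF assms, of k] by force
    qed
  qed
qed

lemma cf_q_mono: assumes "y \<notin> \<rat>" "m \<le> n" shows "cf_q y m \<le> cf_q y n"
  using lift_Suc_mono_le[of "cf_q y", OF cf_q_step[OF assms(1)] assms(2)] .

lemma cf_det: "cf_p y (Suc n) * cf_q y n - cf_p y n * cf_q y (Suc n) = (-1)^n"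
proof (induction n)
  case 0 then show ?case by (simp add: algebra_simps)
next
  case (Suc n)
  have "cf_p y (Suc (Suc n)) * cf_q y (Suc n) - cf_p y (Suc n) * cf_q y (Suc (Suc n))
      = - (cf_p y (Suc n) * cf_q y n - cf_p y n * cf_q y (Suc n))"
    by (simp add: algebra_simps)
  then show ?case using Suc by simp
qed

lemma cf_coprime: "coprime (cf_p y n) (cf_q y n)"
proof (rule coprimeI)
  fix c assume "c dvd cf_p y n" "c dvd cf_q y n"
  then have "c dvd cf_p y (Suc n) * cf_q y n - cf_p y n * cf_q y (Suc n)" by simp
  then have "c dvd (-1)^n" by (simp only: cf_det)
  then show "is_unit c" by (rule dvd_unit_imp_unit) simp
qed

lemma cf_q_coprime: "coprime (cf_q y n) (cf_q y (Suc n))"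
proof (rule coprimeI)
  fix c assume "c dvd cf_q y n" "c dvd cf_q y (Suc n)"
  then have "c dvd cf_p y (Suc n) * cf_q y n - cf_p y n * cf_q y (Suc n)" by simp
  then have "c dvd (-1)^n" by (simp only: cf_det)
  then show "is_unit c" by (rule dvd_unit_imp_unit) simp
qed

lemma cf_not_both_oddodd:
  "\<not> ((odd (cf_p y n) \<and> odd (cf_q y n)) \<and> (odd (cf_p y (Suc n)) \<and> odd (cf_q y (Suc n))))"
proof
  assume h: "(odd (cf_p y n) \<and> odd (cf_q y n)) \<and> (odd (cf_p y (Suc n)) \<and> odd (cf_q y (Suc n)))"
  have "even (cf_p y (Suc n) * cf_q y n - cf_p y n * cf_q y (Suc n))" using h by simp
  then show False by (simp only: cf_det) simp
qed

lemma cfE_rec: "cfE y (Suc (Suc n)) = of_int (cf_a y (Suc (Suc n))) * cfE y (Suc n) + cfE y n"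
  by (simp add: cfE_def algebra_simps)

lemma cfE_rel: assumes "y \<notin> \<rat>"
  shows "cfE y (Suc n) * cf_rem y (Suc (Suc n)) = - cfE y n"
proof (induction n)
  case 0
  define z where "z = y - of_int (cf_a y 0)"
  have z0: "z \<noteq> 0" using cf_rem_frac[OF assms, of 0] by (simp add: z_def)
  have r1: "cf_rem y (Suc 0) = 1 / z" using cf_rem_Suc[of y 0] by (simp add: z_def)
  define a where "a = real_of_int (cf_a y (Suc 0))"
  have d: "cf_rem y (Suc 0) - a \<noteq> 0" using cf_rem_frac[OF assms, of "Suc 0"] by (simp add: a_def)
  have r2: "cf_rem y (Suc (Suc 0)) = 1 / (cf_rem y (Suc 0) - a)" using cf_rem_Suc[of y "Suc 0"] by (simp add: a_def)
  have E1: "cfE y (Suc 0) = a * z - 1" by (simp add: cfE_def a_def z_def algebra_simps)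
  have E0: "cfE y 0 = z" by (simp add: cfE_def z_def)
  have d': "1 - a * z \<noteq> 0" using d z0 unfolding r1 by (simp add: field_simps)
  show ?case using z0 d d' unfolding E1 E0 r2 r1
    by (simp add: field_simps)
next
  case (Suc n)
  define a where "a = real_of_int (cf_a y (Suc (Suc n)))"
  define r where "r = cf_rem y (Suc (Suc n))"
  have d: "r - a \<noteq> 0" using cf_rem_frac[OF assms, of "Suc (Suc n)"] by (simp add: a_def r_def)
  have r3: "cf_rem y (Suc (Suc (Suc n))) = 1 / (r - a)" using cf_rem_Suc[of y "Suc (Suc n)"]
    by (simp add: a_def r_def)
  have "cfE y (Suc (Suc n)) = a * cfE y (Suc n) + cfE y n" by (simp add: cfE_rec a_def)
  also have "cfE y n = - cfE y (Suc n) * r" using Suc by (simp add: r_def)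
  finally have "cfE y (Suc (Suc n)) = - cfE y (Suc n) * (r - a)" by (simp add: algebra_simps)
  then show ?case unfolding r3 using d by simp
qed

lemma cfE_nz: assumes "y \<notin> \<rat>" shows "cfE y n \<noteq> 0"
proof
  assume "cfE y n = 0"
  then have "y = of_int (cf_p y n) / of_int (cf_q y n)"
    using cf_q_pos[OF assms, of n] by (simp add: cfE_def field_simps)
  then have "y \<in> \<rat>" by (metis Rats_divide Rats_of_int)
  then show False using assms by simp
qed

lemma cfE_sign: assumes "y \<notin> \<rat>" shows "cfE y n * cfE y (Suc n) < 0"
proof -
  have r: "cf_rem y (Suc (Suc n)) > 0" using cf_rem_gt1[OF assms] by (meson less_trans zero_less_one)
  have "cfE y n * cfE y (Suc n) * cf_rem y (Suc (Suc n)) = cfE y n * (cfE y (Suc n) * cf_rem y (Suc (Suc n)))" by (simp only: mult.assoc)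
  also have "\<dots> = - (cfE y n * cfE y n)" by (simp only: cfE_rel[OF assms])
  also have "\<dots> < 0" using cfE_nz[OF assms, of n] by (auto simp: zero_less_mult_iff)
  finally show ?thesis using r by (simp add: mult_less_0_iff)
qed

lemma cfE_det: "of_int (cf_q y (Suc n)) * cfE y n - of_int (cf_q y n) * cfE y (Suc n) = (-1)^n"
proof -
  have "real_of_int (cf_p y (Suc n) * cf_q y n - cf_p y n * cf_q y (Suc n)) = (-1)^n"
    by (simp only: cf_det) simp
  then show ?thesis by (simp add: cfE_def algebra_simps)
qed

lemma cfE_bound: assumes "y \<notin> \<rat>" shows "\<bar>cfE y n\<bar> * of_int (cf_q y (Suc n)) < 1"
proof -
  have q0: "real_of_int (cf_q y n) \<ge> 1" "real_of_int (cf_q y (Suc n)) \<ge> 1"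
    using cf_q_pos[OF assms] by simp_all
  have s: "cfE y n * cfE y (Suc n) < 0" by (rule cfE_sign[OF assms])
  have "\<bar>of_int (cf_q y (Suc n)) * cfE y n - of_int (cf_q y n) * cfE y (Suc n)\<bar> = 1"
    by (simp only: cfE_det) simp
  moreover have "\<bar>of_int (cf_q y (Suc n)) * cfE y n - of_int (cf_q y n) * cfE y (Suc n)\<bar>
     = of_int (cf_q y (Suc n)) * \<bar>cfE y n\<bar> + of_int (cf_q y n) * \<bar>cfE y (Suc n)\<bar>"
  proof -
    have q0': "real_of_int (cf_q y n) > 0" "real_of_int (cf_q y (Suc n)) > 0" using q0 by simp_all
    from s have "(cfE y n > 0 \<and> cfE y (Suc n) < 0) \<or> (cfE y n < 0 \<and> cfE y (Suc n) > 0)"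
      by (simp add: mult_less_0_iff)
    then show ?thesis
    proof
      assume h: "cfE y n > 0 \<and> cfE y (Suc n) < 0"
      have A: "of_int (cf_q y (Suc n)) * cfE y n > 0" using h q0' by simp
      have B: "of_int (cf_q y n) * cfE y (Suc n) < 0" using h q0' by (simp add: mult_pos_neg)
      have "of_int (cf_q y (Suc n)) * cfE y n - of_int (cf_q y n) * cfE y (Suc n) > 0" using A B by linarith
      then show ?thesis using h q0' by (simp add: abs_of_neg abs_of_pos)
    next
      assume h: "cfE y n < 0 \<and> cfE y (Suc n) > 0"
      have A: "of_int (cf_q y (Suc n)) * cfE y n < 0" using h q0' by (simp add: mult_pos_neg)
      have B: "of_int (cf_q y n) * cfE y (Suc n) > 0" using h q0' by simp
      have "of_int (cf_q y (Suc n)) * cfE y n - of_int (cf_q y n) * cfE y (Suc n) < 0" using A B by linarith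
      then show ?thesis using h q0' by (simp add: abs_of_neg abs_of_pos)
    qed
  qed
  moreover have "of_int (cf_q y n) * \<bar>cfE y (Suc n)\<bar> > 0"
    using q0 cfE_nz[OF assms, of "Suc n"] by simp
  ultimately show ?thesis by (simp add: algebra_simps)
qed


lemma abs_add_same_sign: "(a::real) * b > 0 \<Longrightarrow> \<bar>a + b\<bar> = \<bar>a\<bar> + \<bar>b\<bar>"
  by (auto simp: zero_less_mult_iff)

lemma best_approx:
  assumes y: "y \<notin> \<rat>" and Q: "0 < Q" "Q < cf_q y (Suc n)"
  shows "\<bar>cfE y n\<bar> \<le> \<bar>of_int Q * y - of_int P\<bar>"
proof -
  define d :: int where "d = (-1)^n"
  have dd: "d * d = 1" by (simp add: d_def flip: power_add)
  have det: "cf_p y (Suc n) * cf_q y n - cf_p y n * cf_q y (Suc n) = d" by (simp add: cf_det d_def)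
  define u where "u = - d * (P * cf_q y (Suc n) - cf_p y (Suc n) * Q)"
  define v where "v = - d * (cf_p y n * Q - cf_q y n * P)"
  have "u * cf_q y n + v * cf_q y (Suc n) = d * Q * (cf_p y (Suc n) * cf_q y n - cf_p y n * cf_q y (Suc n))"
    by (simp add: u_def v_def algebra_simps)
  also have "\<dots> = Q" using det dd by (simp add: algebra_simps)
  finally have hQ: "Q = u * cf_q y n + v * cf_q y (Suc n)" by simp
  have "u * cf_p y n + v * cf_p y (Suc n) = d * P * (cf_p y (Suc n) * cf_q y n - cf_p y n * cf_q y (Suc n))"
    by (simp add: u_def v_def algebra_simps)
  also have "\<dots> = P" using det dd by (simp add: algebra_simps)
  finally have hP: "P = u * cf_p y n + v * cf_p y (Suc n)" by simp
  have hE: "of_int Q * y - of_int P = of_int u * cfE y n + of_int v * cfE y (Suc n)"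
    unfolding cfE_def by (subst hQ, subst hP) (simp add: algebra_simps)
  have q0: "cf_q y n \<ge> 1" "cf_q y (Suc n) \<ge> 1" using cf_q_pos[OF y] by auto
  consider "v = 0" | "u = 0" | "u \<noteq> 0" "v \<noteq> 0" by blast
  then show ?thesis
  proof cases
    case 1
    then have "Q = u * cf_q y n" using hQ by simp
    then have "u > 0" using Q q0 by (simp add: zero_less_mult_iff)
    then have "\<bar>real_of_int u\<bar> \<ge> 1" by simp
    then have "1 * \<bar>cfE y n\<bar> \<le> \<bar>real_of_int u\<bar> * \<bar>cfE y n\<bar>"
      by (intro mult_right_mono) simp_all
    then show ?thesis using hE 1 by (simp add: abs_mult)
  next
    case 2
    then have "Q = v * cf_q y (Suc n)" using hQ by simp
    then have "v > 0" using Q q0 by (simp add: zero_less_mult_iff)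
    then have "v * cf_q y (Suc n) \<ge> 1 * cf_q y (Suc n)" using q0 by (intro mult_right_mono) auto
    then have False using \<open>Q = v * cf_q y (Suc n)\<close> Q by linarith
    then show ?thesis ..
  next
    case 3
    have uv: "u * v < 0"
    proof (cases "v > 0")
      case True
      then have "v * cf_q y (Suc n) \<ge> 1 * cf_q y (Suc n)" using q0 by (intro mult_right_mono) auto
      then have "u * cf_q y n < 0" using hQ Q by linarith
      then have "u < 0" using q0 by (simp add: mult_less_0_iff)
      then show ?thesis using True by (simp add: mult_less_0_iff)
    next
      case False
      then have "v < 0" using 3 by simp
      then have "v * cf_q y (Suc n) < 0" using q0 by (simp add: mult_less_0_iff)
      then have "u * cf_q y n > 0" using hQ Q by linarith
      then have "u > 0" using q0 by (simp add: zero_less_mult_iff)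
      then show ?thesis using \<open>v < 0\<close> by (simp add: mult_less_0_iff)
    qed
    have "(of_int u * cfE y n) * (of_int v * cfE y (Suc n)) = real_of_int (u * v) * (cfE y n * cfE y (Suc n))"
      by (simp add: algebra_simps)
    also have "\<dots> > 0" by (rule mult_neg_neg) (use uv cfE_sign[OF y, of n] in \<open>simp_all del: of_int_mult\<close>)
    finally have "\<bar>of_int Q * y - of_int P\<bar> = \<bar>of_int u * cfE y n\<bar> + \<bar>of_int v * cfE y (Suc n)\<bar>"
      unfolding hE by (rule abs_add_same_sign)
    moreover have "\<bar>real_of_int u\<bar> \<ge> 1" using 3 by simp
    then have "1 * \<bar>cfE y n\<bar> \<le> \<bar>real_of_int u\<bar> * \<bar>cfE y n\<bar>"
      by (intro mult_right_mono) simp_all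
    moreover have "0 \<le> \<bar>real_of_int v\<bar> * \<bar>cfE y (Suc n)\<bar>" by simp
    ultimately show ?thesis unfolding abs_mult by linarith
  qed
qed

lemma legendre:
  assumes y: "y \<notin> \<rat>" and Q: "0 < Q" and cop: "coprime P Q"
    and approx: "\<bar>y - of_int P / of_int Q\<bar> < 1 / (2 * of_int Q ^ 2)"
  shows "\<exists>n. cf_p y n = P \<and> cf_q y n = Q"
proof -
  define m where "m = (LEAST m. Q < cf_q y m)"
  have ex: "Q < cf_q y (Suc (nat Q))" using cf_q_ge[OF y, of "Suc (nat Q)"] Q by simp
  have m1: "Q < cf_q y m" unfolding m_def by (rule LeastI, rule ex)
  have "m \<noteq> 0"
  proof
    assume "m = 0" then show False using m1 Q by simp
  qed
  then obtain n where mn: "m = Suc n" by (cases m) auto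
  have qn: "cf_q y n \<le> Q" using not_less_Least[of n "\<lambda>m. Q < cf_q y m"] mn unfolding m_def by force
  have Qr: "real_of_int Q > 0" using Q by simp
  have "\<bar>of_int Q * y - of_int P\<bar> = of_int Q * \<bar>y - of_int P / of_int Q\<bar>"
    using Qr by (simp add: abs_mult [symmetric] field_simps)
  also have "\<dots> < of_int Q * (1 / (2 * of_int Q ^ 2))" using mult_strict_left_mono[OF approx Qr] by simp
  also have "\<dots> = 1 / (2 * of_int Q)" using Qr by (simp add: power2_eq_square)
  finally have A: "\<bar>of_int Q * y - of_int P\<bar> < 1 / (2 * of_int Q)" .
  have B: "\<bar>cfE y n\<bar> \<le> \<bar>of_int Q * y - of_int P\<bar>" using best_approx[OF y Q] m1 mn by simp
  have eq: "P * cf_q y n = cf_p y n * Q"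
  proof (rule ccontr)
    assume "P * cf_q y n \<noteq> cf_p y n * Q"
    then have "\<bar>P * cf_q y n - cf_p y n * Q\<bar> \<ge> 1" by linarith
    then have "\<bar>real_of_int (P * cf_q y n - cf_p y n * Q)\<bar> \<ge> 1" by linarith
    moreover have "real_of_int (P * cf_q y n - cf_p y n * Q)
        = of_int Q * cfE y n - of_int (cf_q y n) * (of_int Q * y - of_int P)"
      by (simp add: cfE_def algebra_simps)
    ultimately have "1 \<le> \<bar>of_int Q * cfE y n - of_int (cf_q y n) * (of_int Q * y - of_int P)\<bar>" by simp
    also have "\<dots> \<le> \<bar>of_int Q * cfE y n\<bar> + \<bar>of_int (cf_q y n) * (of_int Q * y - of_int P)\<bar>"
      by (rule abs_triangle_ineq4)
    also have "\<dots> = of_int Q * \<bar>cfE y n\<bar> + of_int (cf_q y n) * \<bar>of_int Q * y - of_int P\<bar>"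
      using Qr cf_q_pos[OF y, of n] by (simp add: abs_mult)
    also have "\<dots> \<le> of_int Q * \<bar>of_int Q * y - of_int P\<bar> + of_int Q * \<bar>of_int Q * y - of_int P\<bar>"
      using Qr B qn by (intro add_mono mult_left_mono mult_right_mono) auto
    also have "\<dots> = 2 * of_int Q * \<bar>of_int Q * y - of_int P\<bar>" by simp
    also have "\<dots> < 2 * of_int Q * (1 / (2 * of_int Q))" using mult_strict_left_mono[OF A, of "2 * of_int Q"] Qr by simp
    also have "\<dots> = 1" using Qr by simp
    finally show False by simp
  qed
  have "Q dvd P * cf_q y n" using eq by simp
  then have d1: "Q dvd cf_q y n" using cop by (simp add: coprime_commute coprime_dvd_mult_right_iff)
  have "cf_q y n dvd cf_p y n * Q" using eq by (metis dvd_triv_right)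
  then have d2: "cf_q y n dvd Q" using cf_coprime[of y n] by (simp add: coprime_commute coprime_dvd_mult_right_iff)
  have qeq: "cf_q y n = Q" using d1 d2 Q cf_q_pos[OF y, of n] by (simp add: zdvd_antisym_nonneg)
  then have "cf_p y n = P" using eq Q by simp
  then show ?thesis using qeq by blast
qed


definition Tidx :: "real \<Rightarrow> real \<Rightarrow> nat set" where
  "Tidx y t = {n. \<not> (odd (cf_p y n) \<and> odd (cf_q y n)) \<and>
       \<bar>y - of_int (cf_p y n) / of_int (cf_q y n)\<bar> < 1 / (of_int (cf_q y n)) powr t}"

definition Gidx :: "real \<Rightarrow> real \<Rightarrow> nat set" where
  "Gidx y g = {n. cf_q y n mod 4 \<in> {0, 1, 3} \<and>
       \<bar>y - of_int (cf_p y n) / of_int (cf_q y n)\<bar> < 1 / (of_int (cf_q y n)) powr g}"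

lemma powr_big:
  assumes e: "(e::real) > 0" shows "\<exists>M>0. \<forall>z\<ge>M. c \<le> z powr e"
proof (cases "c \<le> 0")
  case True
  have "\<forall>z\<ge>1. c \<le> z powr e"
  proof (intro allI impI)
    fix z :: real
    have "0 \<le> z powr e" by simp
    then show "c \<le> z powr e" using True by linarith
  qed
  then show ?thesis by (intro exI[of _ 1]) auto
next
  case False
  define M where "M = c powr (1 / e)"
  have M0: "M > 0" using False by (simp add: M_def)
  have "\<forall>z\<ge>M. c \<le> z powr e"
  proof (intro allI impI)
    fix z assume "M \<le> z"
    then have "M powr e \<le> z powr e" using M0 e by (intro powr_mono2) auto
    moreover have "M powr e = c" using False e by (simp add: M_def powr_powr)
    ultimately show "c \<le> z powr e" by simp
  qed
  then show ?thesis using M0 by blast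
qed

lemma conv_approx:
  assumes y: "y \<notin> \<rat>" and t: "t \<le> 2"
  shows "\<bar>y - of_int (cf_p y n) / of_int (cf_q y n)\<bar> < 1 / (of_int (cf_q y n)) powr t"
proof -
  define q where "q = real_of_int (cf_q y n)"
  define q1 where "q1 = real_of_int (cf_q y (Suc n))"
  have q: "q \<ge> 1" "q \<le> q1" using cf_q_pos[OF y, of n] cf_q_step[OF y, of n]
    by (simp_all add: q_def q1_def)
  have "y - of_int (cf_p y n) / of_int (cf_q y n) = cfE y n / q"
    using q by (simp add: cfE_def q_def field_simps)
  then have "\<bar>y - of_int (cf_p y n) / of_int (cf_q y n)\<bar> = \<bar>cfE y n\<bar> / q"
    using q by (simp add: abs_divide)
  also have "\<bar>cfE y n\<bar> < 1 / q1" using cfE_bound[OF y, of n] q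
    by (simp add: q1_def field_simps)
  then have "\<bar>cfE y n\<bar> / q < 1 / q1 / q" using q by (intro divide_strict_right_mono) auto
  also have "1 / q1 / q \<le> 1 / q / q" using q by (simp add: frac_le)
  also have "1 / q / q = 1 / q powr 2" using q by (simp add: power2_eq_square)
  also have "1 / q powr 2 \<le> 1 / q powr t" using q t
    by (intro divide_left_mono powr_mono mult_pos_pos) auto
  finally show ?thesis by (simp add: q_def)
qed

lemma T_low: assumes y: "y \<notin> \<rat>" and t: "t \<le> 2" shows "infinite (Tidx y t)"
  unfolding infinite_nat_iff_unbounded_le
proof
  fix m
  have "\<not> (odd (cf_p y m) \<and> odd (cf_q y m)) \<or> \<not> (odd (cf_p y (Suc m)) \<and> odd (cf_q y (Suc m)))"
    using cf_not_both_oddodd[of y m] by blast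
  then show "\<exists>n\<ge>m. n \<in> Tidx y t"
    using conv_approx[OF y t] unfolding Tidx_def by (metis (mono_tags, lifting) le_Suc_eq mem_Collect_eq order_refl)
qed

lemma odd_mod4: "odd (q::int) \<Longrightarrow> q mod 4 \<in> {0, 1, 3}" by (elim oddE) (simp, presburger)

lemma G_low: assumes y: "y \<notin> \<rat>" and t: "t \<le> 2" shows "infinite (Gidx y t)"
  unfolding infinite_nat_iff_unbounded_le
proof
  fix m
  have "odd (cf_q y m) \<or> odd (cf_q y (Suc m))"
  proof (rule ccontr)
    assume "\<not> ?thesis"
    then have "2 dvd cf_q y m" "2 dvd cf_q y (Suc m)" by auto
    then have "is_unit (2::int)" using cf_q_coprime[of y m] coprime_common_divisor by blast
    then show False by simp
  qed
  then show "\<exists>n\<ge>m. n \<in> Gidx y t"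
    using conv_approx[OF y t] odd_mod4 unfolding Gidx_def by (metis (mono_tags, lifting) le_Suc_eq mem_Collect_eq order_refl)
qed

lemma sup_le_aux:
  assumes "\<And>a a'. a \<in> A \<Longrightarrow> a' < a \<Longrightarrow> a' \<in> B"
  shows "Sup (ereal ` A) \<le> Sup (ereal ` B)"
proof (rule Sup_least)
  fix z assume "z \<in> ereal ` A"
  then obtain a where a: "a \<in> A" "z = ereal a" by auto
  show "z \<le> Sup (ereal ` B)" unfolding a(2)
  proof (rule dense_le)
    fix w assume w: "w < ereal a"
    show "w \<le> Sup (ereal ` B)"
    proof (cases w)
      case (real r)
      then have "r \<in> B" using w assms a(1) by auto
      then show ?thesis using real by (simp add: Sup_upper)
    qed (use w in auto)
  qed
qed

lemma ineq1:
  fixes Z g g' d :: real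
  assumes Z: "Z \<ge> 1" and h1: "2 \<le> Z powr (g - g')" and h2: "2 \<le> Z powr (g' - 2)"
    and d: "d < 2 / Z powr g"
  shows "d < 1 / Z powr g' \<and> d < 1 / (2 * Z^2)"
proof -
  have Zg: "Z powr g = Z powr (g - g') * Z powr g'" by (simp flip: powr_add)
  have "Z powr (g' - 2) * Z powr 2 = Z powr g'" by (simp only: powr_add[symmetric]) simp
  then have Zg': "Z powr g' = Z powr (g' - 2) * Z^2" using Z by simp
  have p: "Z powr g' > 0" using Z by simp
  have "2 * Z powr g' \<le> Z powr g" unfolding Zg using h1 p by (intro mult_right_mono) auto
  then have "2 / Z powr g \<le> 1 / Z powr g'" using p by (simp add: field_simps)
  moreover have "2 * Z^2 \<le> Z powr g'" unfolding Zg' using h2 Z by (intro mult_right_mono) auto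
  then have "1 / Z powr g' \<le> 1 / (2 * Z^2)" using p Z by (intro divide_left_mono) auto
  ultimately show ?thesis using d by linarith
qed

lemma ineq2:
  fixes Z q s t t' d :: real
  assumes Z: "Z \<ge> 1" and s: "s = 1 \<or> s = 2" and q: "q = s * Z" and tt: "0 \<le> t'"
    and h1: "2 powr t' \<le> Z powr (t - t')" and h2: "2 \<le> q powr (t' - 2)"
    and d: "d < 1 / (2 * Z powr t)"
  shows "d < 1 / q powr t' \<and> d < 1 / (2 * q^2)"
proof -
  have s0: "0 < s" "s \<le> 2" using s by auto
  have q1: "q \<ge> 1" using Z s q by auto
  have "q powr t' = s powr t' * Z powr t'" using q s0 Z by (simp add: powr_mult)
  also have "\<dots> \<le> 2 powr t' * Z powr t'" using s0 tt by (intro mult_right_mono powr_mono2) auto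
  also have "\<dots> \<le> Z powr (t - t') * Z powr t'" using h1 by (intro mult_right_mono) auto
  also have "\<dots> = Z powr t" by (simp flip: powr_add)
  also have "\<dots> < 2 * Z powr t" using Z by simp
  finally have A: "q powr t' < 2 * Z powr t" .
  have "1 / (2 * Z powr t) < 1 / q powr t'" using A q1 Z by (intro divide_strict_left_mono mult_pos_pos) auto
  moreover have "q powr (t' - 2) * q powr 2 = q powr t'" by (simp only: powr_add[symmetric]) simp
  then have Zg': "q powr t' = q powr (t' - 2) * q^2" using q1 by simp
  have "2 * q^2 \<le> q powr t'" unfolding Zg' using h2 q1 by (intro mult_right_mono) auto
  then have "1 / q powr t' \<le> 1 / (2 * q^2)" using q1 by (intro divide_left_mono) auto
  ultimately show ?thesis using d by linarith
qed


lemma irrat2: "x \<notin> \<rat> \<Longrightarrow> 2 * x \<notin> \<rat>"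
proof
  assume "x \<notin> \<rat>" "2 * x \<in> \<rat>"
  then have "(2 * x) / 2 \<in> \<rat>" by (intro Rats_divide) auto
  then show False using \<open>x \<notin> \<rat>\<close> by simp
qed

lemma idx_gt:
  assumes y: "y \<notin> \<rat>" and "cf_q y B < cf_q y m" shows "B < m"
proof (rule ccontr)
  assume "\<not> B < m"
  then have "cf_q y m \<le> cf_q y B" using cf_q_mono[OF y] by simp
  then show False using assms by simp
qed

lemma C1:
  assumes x: "x \<notin> \<rat>" and G: "infinite (Gidx x g)" and gg: "g' < g"
  shows "infinite (Tidx (2 * x) g')"
proof (cases "g' \<le> 2")
  case True then show ?thesis using T_low[OF irrat2[OF x]] by simp
next
  case False
  then have g2: "2 < g'" by simp
  have y: "2 * x \<notin> \<rat>" using irrat2[OF x] .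
  obtain M1 where M1: "M1 > 0" "\<forall>z\<ge>M1. 2 \<le> z powr (g - g')" using powr_big[of "g - g'" 2] gg by auto
  obtain M2 where M2: "M2 > 0" "\<forall>z\<ge>M2. 2 \<le> z powr (g' - 2)" using powr_big[of "g' - 2" 2] g2 by auto
  show ?thesis unfolding infinite_nat_iff_unbounded_le
  proof
    fix B
    define N where "N = 2 * nat \<lceil>max M1 M2\<rceil> + 2 * nat (cf_q (2 * x) B) + 2"
    from G obtain n where n: "n \<ge> N" "n \<in> Gidx x g" unfolding infinite_nat_iff_unbounded_le by blast
    define p where "p = cf_p x n"
    define q where "q = cf_q x n"
    have qN: "int N \<le> q" using cf_q_ge[OF x, of n] n(1) by (simp add: q_def)
    have q1: "1 \<le> q" using cf_q_pos[OF x] by (simp add: q_def)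
    have cop: "coprime p q" by (simp add: p_def q_def cf_coprime)
    have qm: "q mod 4 \<in> {0, 1, 3}" and apx: "\<bar>x - of_int p / of_int q\<bar> < 1 / (of_int q) powr g"
      using n(2) by (simp_all add: Gidx_def p_def q_def)
    have gpos: "g > 0" using gg g2 by simp
    have "\<exists>P Q. 0 < Q \<and> coprime P Q \<and> \<not> (odd P \<and> odd Q) \<and> max M1 M2 \<le> real_of_int Q \<and> 1 \<le> Q
       \<and> cf_q (2 * x) B < Q \<and> \<bar>2 * x - of_int P / of_int Q\<bar> < 2 / (of_int Q) powr g"
    proof (cases "odd q")
      case True
      have "2 * x - of_int (2 * p) / of_int q = 2 * (x - of_int p / of_int q)" by simp
      then have "\<bar>2 * x - of_int (2 * p) / of_int q\<bar> < 2 / (of_int q) powr g" using apx by simp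
      moreover have "coprime (2 * p) q" using cop True by simp
      moreover have "max M1 M2 \<le> real_of_int q"
      proof -
        have "max M1 M2 \<le> real_of_int \<lceil>max M1 M2\<rceil>" by linarith
        also have "\<dots> \<le> real_of_int q" using qN M1 unfolding N_def by linarith
        finally show ?thesis .
      qed
      moreover have "cf_q (2 * x) B < q" using qN cf_q_pos[OF y, of B] unfolding N_def by linarith
      ultimately have "0 < q \<and> coprime (2 * p) q \<and> \<not> (odd (2 * p) \<and> odd q) \<and> max M1 M2 \<le> real_of_int q \<and> 1 \<le> q
       \<and> cf_q (2 * x) B < q \<and> \<bar>2 * x - of_int (2 * p) / of_int q\<bar> < 2 / (of_int q) powr g"
        using q1 by auto
      then show ?thesis by blast
    next
      case False
      then have q4: "q mod 4 = 0" using qm by (auto, presburger+)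
      define Q where "Q = q div 2"
      have qQ: "q = 2 * Q" using q4 unfolding Q_def by presburger
      have Qe: "even Q" using q4 unfolding Q_def by presburger
      have "2 * x - of_int p / of_int Q = 2 * (x - of_int p / of_int q)" using qQ by (simp add: field_simps)
      then have "\<bar>2 * x - of_int p / of_int Q\<bar> < 2 / (of_int q) powr g" using apx by simp
      also have "2 / (of_int q) powr g \<le> 2 / (of_int Q) powr g"
      proof -
        have "1 \<le> Q" using qN qQ unfolding N_def by linarith
        moreover have "(of_int Q) powr g \<le> (of_int q) powr g" using qQ gpos \<open>1 \<le> Q\<close>
          by (intro powr_mono2) auto
        ultimately show ?thesis by (intro divide_left_mono mult_pos_pos) auto
      qed
      finally have A: "\<bar>2 * x - of_int p / of_int Q\<bar> < 2 / (of_int Q) powr g" .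
      moreover have "coprime p Q" using cop qQ by simp
      moreover have "max M1 M2 \<le> real_of_int Q"
      proof -
        have "max M1 M2 \<le> real_of_int \<lceil>max M1 M2\<rceil>" by linarith
        also have "\<dots> \<le> real_of_int Q" using qN M1 qQ unfolding N_def by linarith
        finally show ?thesis .
      qed
      moreover have "cf_q (2 * x) B < Q" using qN qQ cf_q_pos[OF y, of B] unfolding N_def by linarith
      moreover have "1 \<le> Q" using qN qQ unfolding N_def by linarith
      ultimately have "0 < Q \<and> coprime p Q \<and> \<not> (odd p \<and> odd Q) \<and> max M1 M2 \<le> real_of_int Q \<and> 1 \<le> Q
       \<and> cf_q (2 * x) B < Q \<and> \<bar>2 * x - of_int p / of_int Q\<bar> < 2 / (of_int Q) powr g"
        using Qe by auto
      then show ?thesis by blast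
    qed
    then obtain P Q where PQ: "0 < Q" "coprime P Q" "\<not> (odd P \<and> odd Q)" "max M1 M2 \<le> real_of_int Q" "1 \<le> Q"
       "cf_q (2 * x) B < Q" "\<bar>2 * x - of_int P / of_int Q\<bar> < 2 / (of_int Q) powr g" by blast
    have I: "\<bar>2 * x - of_int P / of_int Q\<bar> < 1 / (of_int Q) powr g' \<and>
             \<bar>2 * x - of_int P / of_int Q\<bar> < 1 / (2 * (of_int Q)^2)"
      by (rule ineq1) (use PQ M1 M2 in auto)
    obtain m where m: "cf_p (2 * x) m = P" "cf_q (2 * x) m = Q"
      using legendre[OF y PQ(1) PQ(2)] I by auto
    have "B < m" using idx_gt[OF y] PQ(6) m(2) by simp
    moreover have "m \<in> Tidx (2 * x) g'" unfolding Tidx_def using m PQ(3) I by simp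
    ultimately show "\<exists>m\<ge>B. m \<in> Tidx (2 * x) g'" by (intro exI[of _ m]) auto
  qed
qed

lemma C2:
  assumes x: "x \<notin> \<rat>" and T: "infinite (Tidx (2 * x) t)" and tt: "t' < t"
  shows "infinite (Gidx x t')"
proof (cases "t' \<le> 2")
  case True then show ?thesis using G_low[OF x] by simp
next
  case False
  then have t2: "2 < t'" by simp
  have y: "2 * x \<notin> \<rat>" using irrat2[OF x] .
  obtain M1 where M1: "M1 > 0" "\<forall>z\<ge>M1. 2 powr t' \<le> z powr (t - t')" using powr_big[of "t - t'" "2 powr t'"] tt by auto
  obtain M2 where M2: "M2 > 0" "\<forall>z\<ge>M2. 2 \<le> z powr (t' - 2)" using powr_big[of "t' - 2" 2] t2 by auto
  show ?thesis unfolding infinite_nat_iff_unbounded_le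
  proof
    fix B
    define N where "N = nat \<lceil>max M1 M2\<rceil> + nat (cf_q x B) + 1"
    from T obtain m where m: "m \<ge> N" "m \<in> Tidx (2 * x) t" unfolding infinite_nat_iff_unbounded_le by blast
    define P where "P = cf_p (2 * x) m"
    define Q where "Q = cf_q (2 * x) m"
    have QN: "int N \<le> Q" using cf_q_ge[OF y, of m] m(1) by (simp add: Q_def)
    have Q1: "1 \<le> Q" using cf_q_pos[OF y] by (simp add: Q_def)
    have cop: "coprime P Q" by (simp add: P_def Q_def cf_coprime)
    have par: "\<not> (odd P \<and> odd Q)" and apx: "\<bar>2 * x - of_int P / of_int Q\<bar> < 1 / (of_int Q) powr t"
      using m(2) by (simp_all add: Tidx_def P_def Q_def)
    have QM: "max M1 M2 \<le> real_of_int Q"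
    proof -
      have "max M1 M2 \<le> real_of_int \<lceil>max M1 M2\<rceil>" by linarith
      also have "\<dots> \<le> real_of_int Q" using QN M1 unfolding N_def by linarith
      finally show ?thesis .
    qed
    have QB: "cf_q x B < Q" using QN cf_q_pos[OF x, of B] unfolding N_def by linarith
    have hx: "\<bar>x - of_int P / (2 * of_int Q)\<bar> < 1 / (2 * (of_int Q) powr t)"
    proof -
      have "x - of_int P / (2 * of_int Q) = (2 * x - of_int P / of_int Q) / 2" by (simp add: field_simps)
      then show ?thesis using apx by simp
    qed
    have "\<exists>p q s. 0 < q \<and> coprime p q \<and> q mod 4 \<in> {0, 1, 3} \<and> (s = 1 \<or> s = 2) \<and> real_of_int q = s * of_int Q
       \<and> \<bar>x - of_int p / of_int q\<bar> < 1 / (2 * (of_int Q) powr t)"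
    proof (cases "even P")
      case True
      then obtain p where p: "P = 2 * p" by blast
      have Qo: "odd Q"
      proof
        assume "even Q"
        then have "is_unit (2::int)" using cop True coprime_common_divisor by blast
        then show False by simp
      qed
      have "coprime p Q" using cop p by simp
      moreover have "of_int p / of_int Q = of_int P / (2 * real_of_int Q)" using p by simp
      ultimately have "0 < Q \<and> coprime p Q \<and> Q mod 4 \<in> {0, 1, 3} \<and> (1 = (1::real) \<or> (1::real) = 2)
         \<and> real_of_int Q = 1 * of_int Q \<and> \<bar>x - of_int p / of_int Q\<bar> < 1 / (2 * (of_int Q) powr t)"
        using Q1 odd_mod4[OF Qo] hx by simp
      then show ?thesis by (intro exI[of _ p, OF exI[of _ Q, OF exI[of _ "1::real"]]])
    next
      case False
      then have Qe: "even Q" using par by simp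
      have "coprime P (2 * Q)" using cop False by simp
      moreover have "(2 * Q) mod 4 = 0" using Qe by (elim evenE) simp
      moreover have "real_of_int (2 * Q) = 2 * of_int Q" by simp
      ultimately have "0 < 2 * Q \<and> coprime P (2 * Q) \<and> (2 * Q) mod 4 \<in> {0, 1, 3} \<and> ((2::real) = 1 \<or> (2::real) = 2)
         \<and> real_of_int (2 * Q) = 2 * of_int Q \<and> \<bar>x - of_int P / of_int (2 * Q)\<bar> < 1 / (2 * (of_int Q) powr t)"
        using Q1 hx by simp
      then show ?thesis by (intro exI[of _ P, OF exI[of _ "2 * Q", OF exI[of _ "2::real"]]])
    qed
    then obtain p q s where pq: "0 < q" "coprime p q" "q mod 4 \<in> {0, 1, 3}" "s = 1 \<or> s = 2"
      "real_of_int q = s * of_int Q" "\<bar>x - of_int p / of_int q\<bar> < 1 / (2 * (of_int Q) powr t)"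
      by (elim exE conjE) (rule that; assumption)
    have qQ: "real_of_int Q \<le> real_of_int q" using pq(4,5) Q1 by auto
    have I: "\<bar>x - of_int p / of_int q\<bar> < 1 / (of_int q) powr t' \<and> \<bar>x - of_int p / of_int q\<bar> < 1 / (2 * (of_int q)^2)"
      by (rule ineq2[OF _ pq(4) pq(5)]) (use Q1 t2 M1 M2 QM qQ pq(6) in auto)
    obtain n where n: "cf_p x n = p" "cf_q x n = q"
      using legendre[OF x pq(1) pq(2)] I by auto
    have "cf_q x B < cf_q x n" using QB qQ n(2) by simp
    then have "B < n" using idx_gt[OF x] by simp
    moreover have "n \<in> Gidx x t'" unfolding Gidx_def using n pq(3) I by simp
    ultimately show "\<exists>n\<ge>B. n \<in> Gidx x t'" by (intro exI[of _ n]) auto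
  qed
qed

theorem lemma3p1:
  fixes x :: real
  assumes "x \<notin> \<rat>"
  shows "gamma_exp x = tau_exp (2 * x)"
proof -
  have g: "gamma_exp x = Sup (ereal ` {g. infinite (Gidx x g)})"
    by (simp add: gamma_exp_def Gidx_def)
  have t: "tau_exp (2 * x) = Sup (ereal ` {g. infinite (Tidx (2 * x) g)})"
    by (simp add: tau_exp_def Tidx_def)
  show ?thesis unfolding g t
  proof (rule antisym)
    show "Sup (ereal ` {g. infinite (Gidx x g)}) \<le> Sup (ereal ` {g. infinite (Tidx (2 * x) g)})"
      by (rule sup_le_aux) (use C1[OF assms] in auto)
    show "Sup (ereal ` {g. infinite (Tidx (2 * x) g)}) \<le> Sup (ereal ` {g. infinite (Gidx x g)})"
      by (rule sup_le_aux) (use C2[OF assms] in auto)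
  qed
qed

end
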